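(* Let $n,p>-1$ be real and $k\in\mathbb{C}$ with $\operatorname{Re}k>-1$. Then $$\int_{0}^{1}\frac{\log^{k+1}(x)\,(x^n-x^p)}{(x^{n+1}-1)(x^{p+1}-1)}\,dx=e^{\frac{i\pi k}{2}}\,\zeta(k+2)\,\Gamma(k+2)\left(\frac{\left(\frac{i}{p+1}\right)^k}{(p+1)^2}-\frac{\left(\frac{i}{n+1}\right)^k}{(n+1)^2}\right).$$
   Context: For $x\in(0,1)$, $\log^{s}(x)=e^{s\log(\log x)}$ with $\log(\log x)=\log|\log x|+i\pi$; all powers are principal, so $\left(\frac{i}{q}\right)^k=e^{i\pi k/2}q^{-k}$ for $q>0$. $\zeta$ is the Riemann zeta function. *)

theory Defs
  imports "HOL-Analysis.Analysis"
begin

text \<open>Riemann zeta function, defined by its Dirichlet series. This agrees with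
  the Riemann zeta function on the half-plane Re s > 1, which is the only region
  where it is used in the statement.\<close>
definition riemann_zeta :: "complex \<Rightarrow> complex" where
  "riemann_zeta s = (\<Sum>m. 1 / (of_nat (Suc m)) powr s)"

end

theory Submission
  imports Defs
begin


lemma ln_powr_neg:
  fixes x :: real and w :: complex
  assumes "0 < x" "x < 1"
  shows "complex_of_real (ln x) powr w = exp (\<i> * of_real pi * w) * complex_of_real (- ln x) powr w"
proof -
  have y: "- ln x > 0" using assms by simp
  have "complex_of_real (ln x) = - complex_of_real (- ln x)" by simp
  moreover have "Ln (- complex_of_real (- ln x)) = Ln (complex_of_real (- ln x)) + \<i> * pi"
    using y by (subst Ln_minus) auto
  ultimately show ?thesis using y
    by (simp add: powr_def exp_add algebra_simps)
qed




lemma image_exp_S: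
  fixes c :: real assumes c: "c > 0"
  shows "(\<lambda>t. exp (- t / c)) ` {0<..} = {0<..<1::real}"
proof (intro set_eqI iffI)
  fix x assume "x \<in> (\<lambda>t. exp (- t / c)) ` {0<..}"
  then obtain t where "t > 0" "x = exp (-t/c)" by auto
  then show "x \<in> {0<..<1}" using c by auto
next
  fix x :: real assume x: "x \<in> {0<..<1}"
  have "ln x < 0" using x by simp
  then have "c * (- ln x) > 0" using c by (simp add: mult_pos_neg)
  then have "-c * ln x > 0" by simp
  then have m: "-c * ln x \<in> {0<..}" by simp
  have e: "x = (\<lambda>t. exp (- t / c)) (-c * ln x)" using x c by simp
  show "x \<in> (\<lambda>t. exp (- t / c)) ` {0<..}" using e m by (rule image_eqI[where f="\<lambda>t. exp (- t / c)"])
qed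

lemma gamma_type_integral:
  fixes c :: real and w :: complex
  assumes c: "c > 0" and w: "Re w > -1"
  shows "set_integrable lebesgue {0<..<1}
           (\<lambda>x. complex_of_real (- ln x) powr w * complex_of_real (x powr (c - 1)))
      \<and> integral {0<..<1} (\<lambda>x. complex_of_real (- ln x) powr w * complex_of_real (x powr (c - 1)))
          = Gamma (w + 1) / complex_of_real c powr (w + 1)"
proof -
  define F where "F = (\<lambda>x::real. complex_of_real (- ln x) powr w * complex_of_real (x powr (c - 1)))"
  define g where "g = (\<lambda>t::real. exp (- t / c))"
  define h where "h = (\<lambda>t::real. - exp (- t / c) / c)"
  define K where "K = 1 / complex_of_real c powr (w + 1)"
  define G where "G = (\<lambda>t::real. complex_of_real t powr (w + 1 - 1) / complex_of_real (exp t))"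
  have Rw: "Re (w + 1) > 0" using w by simp
  have eq: "\<bar>h t\<bar> *\<^sub>R F (g t) = K * G t" if t: "t \<in> {0<..}" for t
  proof -
    have t0: "t > 0" using t by simp
    have r: "exp (- t / c) / c * exp (- t * (c - 1) / c) = exp (- t) / c"
      using c by (simp add: exp_add[symmetric] field_simps)
    have "\<bar>h t\<bar> *\<^sub>R F (g t) = complex_of_real (exp (- t / c) / c) *
            (complex_of_real (t / c) powr w * complex_of_real (exp (- t / c) powr (c - 1)))"
      by (simp add: h_def F_def g_def scaleR_conv_of_real c abs_of_pos)
    also have "exp (- t / c) powr (c - 1) = exp (- t * (c - 1) / c)"
      by (simp add: powr_def)
    also have "complex_of_real (t / c) powr w = exp (w * of_real (ln (t / c)))"
      using t0 c by (subst powr_def) (simp add: Ln_of_real del: of_real_divide)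
    also have "\<dots> = exp (w * of_real (ln t)) / exp (w * of_real (ln c))"
      using t0 c by (simp add: ln_div exp_diff algebra_simps)
    finally have L: "\<bar>h t\<bar> *\<^sub>R F (g t) = complex_of_real (exp (- t / c) / c * exp (- t * (c - 1) / c))
           * (exp (w * of_real (ln t)) / exp (w * of_real (ln c)))"
      by (simp add: algebra_simps)
    have "K = inverse (exp ((w + 1) * of_real (ln c)))"
      using c by (simp add: K_def powr_def Ln_of_real divide_inverse)
    then have K: "K = exp (- ((w + 1) * of_real (ln c)))"
      by (simp add: exp_minus)
    have G: "G t = exp (w * of_real (ln t)) / of_real (exp t)"
      using t0 by (simp add: G_def powr_def Ln_of_real)
    have R: "K * G t = exp (- ((w + 1) * of_real (ln c))) * (exp (w * of_real (ln t)) / of_real (exp t))"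
      unfolding K G ..
    have e1: "exp (- ((w + 1) * of_real (ln c))) = exp (- (w * of_real (ln c))) * exp (- complex_of_real (ln c))"
      by (simp add: exp_add[symmetric] algebra_simps)
    have e2: "exp (- complex_of_real (ln c)) = inverse (complex_of_real c)"
      using c by (simp add: exp_minus exp_of_real)
    have e: "exp (- ((w + 1) * of_real (ln c))) = exp (- (w * of_real (ln c))) / complex_of_real c"
      unfolding e1 e2 by (simp add: divide_inverse)
    show ?thesis unfolding L R e r using c
      by (simp add: exp_minus field_simps exp_of_real)
  qed
  have GI: "G absolutely_integrable_on {0<..}"
    unfolding G_def by (rule absolutely_integrable_Gamma_integral'[OF Rw])
  have abs: "(\<lambda>t. \<bar>h t\<bar> *\<^sub>R F (g t)) absolutely_integrable_on {0<..}"
  proof -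
    have "(\<lambda>t. K * G t) absolutely_integrable_on {0<..}"
      using GI by (rule set_integrable_mult_right)
    then show ?thesis by (rule set_integrable_cong[THEN iffD1, rotated -1]) (auto simp: eq)
  qed
  have "((\<lambda>t. K * G t) has_integral (K * Gamma (w + 1))) {0<..}"
    unfolding G_def by (rule has_integral_mult_right[OF Gamma_integral_complex'[OF Rw]])
  then have "integral {0<..} (\<lambda>t. K * G t) = K * Gamma (w + 1)" by (rule integral_unique)
  then have int: "integral {0<..} (\<lambda>t. \<bar>h t\<bar> *\<^sub>R F (g t)) = K * Gamma (w + 1)"
    by (subst integral_cong[where g="\<lambda>t. K * G t"]) (auto simp: eq)
  have der: "(g has_field_derivative h t) (at t within {0<..})" for t
    using c unfolding g_def h_def by (auto intro!: derivative_eq_intros)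
  have inj: "inj_on g {0<..}"
    using c by (auto simp: inj_on_def g_def)
  have "F absolutely_integrable_on g ` {0<..} \<and> integral (g ` {0<..}) F = K * Gamma (w + 1)"
    using has_absolute_integral_change_of_variables_real[of "{0<..}" g h F "K * Gamma (w + 1)", OF _ der inj]
      abs int by auto
  moreover have "g ` {0<..} = {0<..<1}" unfolding g_def by (rule image_exp_S[OF c])
  moreover have "K * Gamma (w + 1) = Gamma (w + 1) / complex_of_real c powr (w + 1)"
    by (simp add: K_def)
  ultimately show ?thesis unfolding F_def by simp
qed




lemma gamma_type_LINT:
  fixes c :: real and w :: complex
  assumes c: "c > 0" and w: "Re w > -1"
  shows "set_integrable lebesgue {0<..<1}
           (\<lambda>x. complex_of_real (- ln x) powr w * complex_of_real (x powr (c - 1)))"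
    and "(LINT x:{0<..<1}|lebesgue. complex_of_real (- ln x) powr w * complex_of_real (x powr (c - 1)))
          = Gamma (w + 1) / complex_of_real c powr (w + 1)"
proof -
  note A = gamma_type_integral[OF c w]
  show "set_integrable lebesgue {0<..<1}
           (\<lambda>x. complex_of_real (- ln x) powr w * complex_of_real (x powr (c - 1)))"
    using A by blast
  show "(LINT x:{0<..<1}|lebesgue. complex_of_real (- ln x) powr w * complex_of_real (x powr (c - 1)))
          = Gamma (w + 1) / complex_of_real c powr (w + 1)"
    using set_lebesgue_integral_eq_integral(2)[OF conjunct1[OF A]] conjunct2[OF A] by simp
qed

lemma gamma_type_real:
  fixes c r :: real
  assumes c: "c > 0" and r: "r > -1"
  shows "set_integrable lebesgue {0<..<1} (\<lambda>x. (- ln x) powr r * x powr (c - 1))"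
    and "(LINT x:{0<..<1}|lebesgue. (- ln x) powr r * x powr (c - 1)) = Gamma (r + 1) / c powr (r + 1)"
proof -
  have r': "Re (complex_of_real r) > -1" using r by simp
  have eq: "complex_of_real (- ln x) powr complex_of_real r * complex_of_real (x powr (c - 1))
      = complex_of_real ((- ln x) powr r * x powr (c - 1))" if "x \<in> {0<..<1}" for x
    using that by (subst powr_of_real) auto
  have "set_integrable lebesgue {0<..<1} (\<lambda>x. complex_of_real ((- ln x) powr r * x powr (c - 1)))"
    using gamma_type_LINT(1)[OF c r'] by (rule set_integrable_cong[THEN iffD1, rotated -1]) (auto simp del: of_real_minus simp add: eq)
  then show I: "set_integrable lebesgue {0<..<1} (\<lambda>x. (- ln x) powr r * x powr (c - 1))"
    unfolding set_integrable_def
    by (subst complex_of_real_integrable_eq[symmetric]) (simp add: scaleR_conv_of_real)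
  have "complex_of_real (LINT x:{0<..<1}|lebesgue. (- ln x) powr r * x powr (c - 1))
       = (LINT x:{0<..<1}|lebesgue. complex_of_real ((- ln x) powr r * x powr (c - 1)))"
    by (rule set_integral_complex_of_real[symmetric])
  also have "\<dots> = (LINT x:{0<..<1}|lebesgue. complex_of_real (- ln x) powr complex_of_real r * complex_of_real (x powr (c - 1)))"
    by (intro set_lebesgue_integral_cong) (auto simp del: of_real_minus simp add: eq)
  also have "\<dots> = Gamma (complex_of_real r + 1) / complex_of_real c powr (complex_of_real r + 1)"
    by (rule gamma_type_LINT(2)[OF c r'])
  also have "\<dots> = complex_of_real (Gamma (r + 1) / c powr (r + 1))"
    using c by (simp flip: Gamma_complex_of_real powr_of_real)
  finally show "(LINT x:{0<..<1}|lebesgue. (- ln x) powr r * x powr (c - 1)) = Gamma (r + 1) / c powr (r + 1)"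
    by (simp only: of_real_eq_iff)
qed

lemma geo_powr:
  fixes x \<alpha> :: real
  assumes x: "0 < x" "x < 1" and \<alpha>: "\<alpha> > 0"
  shows "(\<lambda>j. x powr (real (Suc j) * \<alpha> - 1)) sums (x powr (\<alpha> - 1) / (1 - x powr \<alpha>))"
proof -
  have "ln x < 0" using x by simp
  then have "\<alpha> * ln x < 0" using \<alpha> by (simp add: mult_pos_neg)
  then have lt: "x powr \<alpha> < 1" using x by (simp add: powr_def)
  have "norm (x powr \<alpha>) < 1" using lt by simp
  from sums_mult[OF geometric_sums[OF this], of "x powr (\<alpha> - 1)"]
  have "(\<lambda>j. x powr (\<alpha> - 1) * (x powr \<alpha>) ^ j) sums (x powr (\<alpha> - 1) / (1 - x powr \<alpha>))" by simp
  moreover have "x powr (\<alpha> - 1) * (x powr \<alpha>) ^ j = x powr (real (Suc j) * \<alpha> - 1)" for j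
    using x by (simp add: powr_power powr_add[symmetric] algebra_simps)
  ultimately show ?thesis by simp
qed




lemma termA:
  fixes c1 c2 :: real and w :: complex
  assumes c1: "c1 > 0" and c2: "c2 > 0" and w: "Re w > -1"
  shows "set_integrable lebesgue {0<..<1}
          (\<lambda>x. complex_of_real (ln x) powr w * complex_of_real (x powr (c1 - 1) - x powr (c2 - 1)))"
    and "(LINT x:{0<..<1}|lebesgue. complex_of_real (ln x) powr w * complex_of_real (x powr (c1 - 1) - x powr (c2 - 1)))
         = exp (\<i> * of_real pi * w) * (Gamma (w + 1) / complex_of_real c1 powr (w + 1)
                                      - Gamma (w + 1) / complex_of_real c2 powr (w + 1))"
proof -
  define E where "E = exp (\<i> * of_real pi * w)"
  define F where "F = (\<lambda>c x. complex_of_real (- ln x) powr w * complex_of_real (x powr (c - 1)))"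
  have eq: "complex_of_real (ln x) powr w * complex_of_real (x powr (c1 - 1) - x powr (c2 - 1))
            = E * (F c1 x - F c2 x)" if "x \<in> {0<..<1}" for x
    using that ln_powr_neg[of x w] unfolding E_def F_def by (simp add: algebra_simps del: of_real_minus)
  have I: "set_integrable lebesgue {0<..<1} (\<lambda>x. E * (F c1 x - F c2 x))"
    unfolding F_def
    by (intro set_integrable_mult_right set_integral_diff(1) gamma_type_LINT(1) c1 c2 w)
  show "set_integrable lebesgue {0<..<1}
          (\<lambda>x. complex_of_real (ln x) powr w * complex_of_real (x powr (c1 - 1) - x powr (c2 - 1)))"
    by (rule set_integrable_cong[THEN iffD1, OF refl refl _ I]) (metis eq)
  have "(LINT x:{0<..<1}|lebesgue. complex_of_real (ln x) powr w * complex_of_real (x powr (c1 - 1) - x powr (c2 - 1)))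
      = (LINT x:{0<..<1}|lebesgue. E * (F c1 x - F c2 x))"
    by (intro set_lebesgue_integral_cong) (simp, metis eq)
  also have "\<dots> = E * ((LINT x:{0<..<1}|lebesgue. F c1 x) - (LINT x:{0<..<1}|lebesgue. F c2 x))"
    unfolding F_def by (simp only: set_integral_mult_right set_integral_diff(2) gamma_type_LINT(1) c1 c2 w)
  also have "\<dots> = E * (Gamma (w + 1) / complex_of_real c1 powr (w + 1)
                                      - Gamma (w + 1) / complex_of_real c2 powr (w + 1))"
    unfolding F_def by (simp only: gamma_type_LINT(2) c1 c2 w)
  finally show "(LINT x:{0<..<1}|lebesgue. complex_of_real (ln x) powr w * complex_of_real (x powr (c1 - 1) - x powr (c2 - 1)))
         = exp (\<i> * of_real pi * w) * (Gamma (w + 1) / complex_of_real c1 powr (w + 1)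
                                      - Gamma (w + 1) / complex_of_real c2 powr (w + 1))"
    unfolding E_def .
qed

lemma series_identity:
  fixes x n p :: real
  assumes x: "0 < x" "x < 1" and n: "n > -1" and p: "p > -1"
  shows "(\<lambda>j. x powr (real (Suc j) * (n + 1) - 1) - x powr (real (Suc j) * (p + 1) - 1)) sums
          ((x powr n - x powr p) / ((x powr (n + 1) - 1) * (x powr (p + 1) - 1)))"
proof -
  have a: "n + 1 > 0" and b: "p + 1 > 0" using n p by auto
  have lt: "x powr \<alpha> < 1" if "\<alpha> > 0" for \<alpha>
  proof -
    have "ln x < 0" using x by simp
    then have "\<alpha> * ln x < 0" using that by (simp add: mult_pos_neg)
    then show ?thesis using x by (simp add: powr_def)
  qed
  have A: "x powr (n + 1) = x powr n * x" and B: "x powr (p + 1) = x powr p * x"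
    using x by (simp_all add: powr_add)
  have A1: "x powr n * x \<noteq> 1" using lt[OF a] A by simp
  have B1: "x powr p * x \<noteq> 1" using lt[OF b] B by simp
  have "(\<lambda>j. x powr (real (Suc j) * (n + 1) - 1) - x powr (real (Suc j) * (p + 1) - 1)) sums
          (x powr (n + 1 - 1) / (1 - x powr (n + 1)) - x powr (p + 1 - 1) / (1 - x powr (p + 1)))"
    by (intro sums_diff geo_powr x a b)
  also have "x powr (n + 1 - 1) / (1 - x powr (n + 1)) - x powr (p + 1 - 1) / (1 - x powr (p + 1))
     = (x powr n - x powr p) / ((x powr (n + 1) - 1) * (x powr (p + 1) - 1))"
    unfolding A B using A1 B1 by (simp add: field_simps)
  finally show ?thesis .
qed

lemma norm_ln_powr:
  fixes x :: real and w :: complex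
  assumes "0 < x" "x < 1"
  shows "norm (complex_of_real (ln x) powr w) = norm (exp (\<i> * of_real pi * w)) * (- ln x) powr Re w"
proof -
  have "norm (complex_of_real (- ln x) powr w) = (- ln x) powr Re w"
    using assms by (subst norm_powr_real_powr) auto
  then show ?thesis using ln_powr_neg[OF assms, of w] by (simp add: norm_mult del: of_real_minus)
qed




lemma final_alg:
  fixes \<beta> :: real and k :: complex
  assumes b: "\<beta> > 0"
  shows "(\<i> / complex_of_real \<beta>) powr k / complex_of_real (\<beta>^2)
       = exp (\<i> * of_real pi * k / 2) / complex_of_real \<beta> powr (k + 2)"
proof -
  have "\<i> / complex_of_real \<beta> = complex_of_real (1 / \<beta>) * \<i>" by (simp add: field_simps)
  then have "(\<i> / complex_of_real \<beta>) powr k = complex_of_real (1 / \<beta>) powr k * \<i> powr k"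
    using b by (simp add: powr_times_real_left del: of_real_divide)
  also have "\<i> powr k = exp (\<i> * of_real pi * k / 2)"
    by (simp add: powr_def algebra_simps)
  also have "complex_of_real (1 / \<beta>) powr k = inverse (complex_of_real \<beta> powr k)"
    using b by (simp add: powr_def Ln_of_real ln_div exp_minus del: of_real_divide)
  also have "complex_of_real \<beta> powr (k + 2) = complex_of_real \<beta> powr k * complex_of_real \<beta> ^ 2"
    using b by (simp add: powr_add)
  ultimately show ?thesis using b by (simp add: field_simps)
qed




theorem mainTheorem18:
  fixes n p :: real and k :: complex
  assumes "n > -1" and "p > -1" and "Re k > -1"
  shows "((\<lambda>x::real. (complex_of_real (ln x)) powr (k + 1)
              * complex_of_real (x powr n - x powr p)
              / complex_of_real ((x powr (n + 1) - 1) * (x powr (p + 1) - 1)))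
          has_integral
           (exp (\<i> * of_real pi * k / 2) * riemann_zeta (k + 2) * Gamma (k + 2)
            * ((\<i> / complex_of_real (p + 1)) powr k / complex_of_real ((p + 1)^2)
               - (\<i> / complex_of_real (n + 1)) powr k / complex_of_real ((n + 1)^2))))
         {0..1}"
proof -
  define S where "S = {0<..<1::real}"
  define \<Phi> where "\<Phi> = (\<lambda>x::real. (complex_of_real (ln x)) powr (k + 1)
              * complex_of_real (x powr n - x powr p)
              / complex_of_real ((x powr (n + 1) - 1) * (x powr (p + 1) - 1)))"
  define L where "L = (\<lambda>x::real. complex_of_real (ln x) powr (k + 1))"
  define c1 where "c1 = (\<lambda>j::nat. real (Suc j) * (n + 1))"
  define c2 where "c2 = (\<lambda>j::nat. real (Suc j) * (p + 1))"
  define u where "u = (\<lambda>(j::nat) (x::real). x powr (c1 j - 1) - x powr (c2 j - 1))"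
  define f where "f = (\<lambda>j x. indicator S x *\<^sub>R (L x * complex_of_real (u j x)))"
  define E where "E = exp (\<i> * of_real pi * (k + 1))"
  define s where "s = k + 2"
  define r where "r = Re k + 1"
  have a: "n + 1 > 0" and b: "p + 1 > 0" using assms by auto
  have c1pos: "c1 j > 0" and c2pos: "c2 j > 0" for j using a b by (auto simp: c1_def c2_def)
  have w: "Re (k + 1) > -1" using assms by simp
  have r0: "r > 0" using assms by (simp add: r_def)
  have Rer: "Re (k + 1) = r" by (simp add: r_def)
  have s1: "k + 1 + 1 = s" by (simp add: s_def)

  have sumsf: "(\<lambda>j. f j x) sums (indicator S x *\<^sub>R \<Phi> x)" for x
  proof (cases "x \<in> S")
    case True
    then have x: "0 < x" "x < 1" by (auto simp: S_def)
    define Q where "Q = (x powr n - x powr p) / ((x powr (n + 1) - 1) * (x powr (p + 1) - 1))"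
    have "(\<lambda>j. u j x) sums Q"
      using series_identity[OF x assms(1,2)] unfolding u_def c1_def c2_def Q_def .
    then have "(\<lambda>j. complex_of_real (u j x)) sums of_real Q" by (rule sums_of_real)
    from sums_mult[OF this, of "L x"]
    have "(\<lambda>j. L x * complex_of_real (u j x)) sums (L x * of_real Q)" .
    moreover have "L x * of_real Q = \<Phi> x" by (simp add: L_def \<Phi>_def Q_def)
    ultimately show ?thesis using True by (simp add: f_def)
  next
    case False
    then show ?thesis by (simp add: f_def)
  qed

  have setf: "set_integrable lebesgue S (\<lambda>x. L x * complex_of_real (u j x))"
    and setfv: "(LINT x:S|lebesgue. L x * complex_of_real (u j x))
         = E * (Gamma s / complex_of_real (c1 j) powr s - Gamma s / complex_of_real (c2 j) powr s)" for j
    using termA[OF c1pos c2pos w, of j j] unfolding S_def L_def u_def E_def s1 by auto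
  have intf: "integrable lebesgue (f j)" for j
    using setf[of j] unfolding set_integrable_def f_def .
  have intfv: "integral\<^sup>L lebesgue (f j)
         = E * (Gamma s / complex_of_real (c1 j) powr s - Gamma s / complex_of_real (c2 j) powr s)" for j
    using setfv[of j] unfolding set_lebesgue_integral_def f_def .

  have normf: "norm (f j x) \<le> indicator S x *\<^sub>R (norm E * ((- ln x) powr r * x powr (c1 j - 1)
                 + (- ln x) powr r * x powr (c2 j - 1)))" for j x
  proof (cases "x \<in> S")
    case True
    then have x: "0 < x" "x < 1" by (auto simp: S_def)
    have nL: "norm (L x) = norm E * (- ln x) powr r"
      using norm_ln_powr[OF x, of "k + 1"] unfolding L_def E_def Rer .
    have "\<bar>u j x\<bar> \<le> x powr (c1 j - 1) + x powr (c2 j - 1)"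
      unfolding u_def using powr_ge_zero[of x "c1 j - 1"] powr_ge_zero[of x "c2 j - 1"]
      by (simp add: abs_le_iff)
    then have "norm E * (- ln x) powr r * \<bar>u j x\<bar> \<le> norm E * (- ln x) powr r * (x powr (c1 j - 1) + x powr (c2 j - 1))"
      by (intro mult_left_mono) auto
    then show ?thesis using True by (simp add: f_def norm_mult nL algebra_simps)
  next
    case False
    then show ?thesis by (simp add: f_def)
  qed

  have summ_norm: "AE x in lebesgue. summable (\<lambda>j. norm (f j x))"
  proof (rule AE_I2)
    fix x :: real
    show "summable (\<lambda>j. norm (f j x))"
    proof (cases "x \<in> S")
      case True
      then have x: "0 < x" "x < 1" by (auto simp: S_def)
      have "summable (\<lambda>j. x powr (c1 j - 1))"
        unfolding c1_def by (rule sums_summable[OF geo_powr[OF x a]])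
      moreover have "summable (\<lambda>j. x powr (c2 j - 1))"
        unfolding c2_def by (rule sums_summable[OF geo_powr[OF x b]])
      ultimately have "summable (\<lambda>j. norm E * ((- ln x) powr r * x powr (c1 j - 1)
                 + (- ln x) powr r * x powr (c2 j - 1)))"
        by (intro summable_mult summable_add) auto
      then show ?thesis
      proof (rule summable_comparison_test'[where N=0])
        fix j :: nat
        show "norm (norm (f j x)) \<le> norm E * ((- ln x) powr r * x powr (c1 j - 1)
                 + (- ln x) powr r * x powr (c2 j - 1))"
          using normf[of j x] True by simp
      qed
    next
      case False
      then show ?thesis by (simp add: f_def)
    qed
  qed

  define B where "B = (\<lambda>j. norm E * (Gamma (r + 1) / c1 j powr (r + 1) + Gamma (r + 1) / c2 j powr (r + 1)))"
  have summ_int: "summable (\<lambda>j. \<integral>x. norm (f j x) \<partial>lebesgue)"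
  proof -
    have bnd: "(\<integral>x. norm (f j x) \<partial>lebesgue) \<le> B j" for j
    proof -
      define g where "g = (\<lambda>x. norm E * ((- ln x) powr r * x powr (c1 j - 1)
                 + (- ln x) powr r * x powr (c2 j - 1)))"
      have r1: "r > -1" using r0 by simp
      have si: "set_integrable lebesgue S g"
        unfolding g_def S_def
        by (intro set_integrable_mult_right set_integral_add(1) gamma_type_real(1) c1pos c2pos r1)
      have sv: "(LINT x:S|lebesgue. g x) = B j"
        unfolding g_def S_def B_def
        by (simp only: set_integral_mult_right set_integral_add(2) gamma_type_real c1pos c2pos r1)
      have "(\<integral>x. norm (f j x) \<partial>lebesgue) \<le> (\<integral>x. indicator S x *\<^sub>R g x \<partial>lebesgue)"
        by (rule integral_mono[OF integrable_norm[OF intf] si[unfolded set_integrable_def]])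
           (use normf in \<open>simp add: g_def\<close>)
      also have "\<dots> = B j" using sv unfolding set_lebesgue_integral_def .
      finally show ?thesis .
    qed
    define K where "K = norm E * Gamma (r + 1) * (1 / (n + 1) powr (r + 1) + 1 / (p + 1) powr (r + 1))"
    have Beq: "B j = K * (1 / real (Suc j) powr (r + 1))" for j
    proof -
      have e1: "c1 j powr (r + 1) = real (Suc j) powr (r + 1) * (n + 1) powr (r + 1)"
        unfolding c1_def by (rule powr_mult)
      have e2: "c2 j powr (r + 1) = real (Suc j) powr (r + 1) * (p + 1) powr (r + 1)"
        unfolding c2_def by (rule powr_mult)
      have "real (Suc j) powr (r + 1) > 0" "(n + 1) powr (r + 1) > 0" "(p + 1) powr (r + 1) > 0"
        using a b by auto
      then show ?thesis unfolding B_def K_def e1 e2 by (simp add: field_simps)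
    qed
    have "summable (\<lambda>j. real j powr (- (r + 1)))"
      using r0 by (subst summable_real_powr_iff) simp
    then have "summable (\<lambda>j. real (Suc j) powr (- (r + 1)))"
      by (subst summable_Suc_iff)
    moreover have "real (Suc j) powr (- (r + 1)) = 1 / real (Suc j) powr (r + 1)" for j
      by (rule powr_minus_divide)
    ultimately have "summable (\<lambda>j. 1 / real (Suc j) powr (r + 1))"
      by simp
    then have "summable B" unfolding Beq by (rule summable_mult)
    then show ?thesis
      by (rule summable_comparison_test'[where N=0]) (use bnd in \<open>auto simp: integral_nonneg\<close>)
  qed

  have sumeq: "(\<lambda>x. \<Sum>j. f j x) = (\<lambda>x. indicator S x *\<^sub>R \<Phi> x)"
    by (rule ext, rule sums_unique[OF sumsf, symmetric])
  have setPhi: "set_integrable lebesgue S \<Phi>"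
    using integrable_suminf[OF intf summ_norm summ_int] unfolding sumeq set_integrable_def .
  define V where "V = (LINT x:S|lebesgue. \<Phi> x)"
  have sumsV: "(\<lambda>j. integral\<^sup>L lebesgue (f j)) sums V"
    using sums_integral[OF intf summ_norm summ_int] unfolding sumeq V_def set_lebesgue_integral_def .
  define C where "C = E * Gamma s * (1 / complex_of_real (n + 1) powr s - 1 / complex_of_real (p + 1) powr s)"
  have fC: "integral\<^sup>L lebesgue (f j) = C * (1 / of_nat (Suc j) powr s)" for j
  proof -
    have "complex_of_real (c1 j) powr s = of_nat (Suc j) powr s * complex_of_real (n + 1) powr s"
      unfolding c1_def using a by (subst of_real_mult, subst powr_times_real) auto
    moreover have "complex_of_real (c2 j) powr s = of_nat (Suc j) powr s * complex_of_real (p + 1) powr s"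
      unfolding c2_def using b by (subst of_real_mult, subst powr_times_real) auto
    moreover have gen: "\<And>A N P G::complex. A \<noteq> 0 \<Longrightarrow> N \<noteq> 0 \<Longrightarrow> P \<noteq> 0 \<Longrightarrow>
        E * (G / (A * N) - G / (A * P)) = E * G * (1 / N - 1 / P) * (1 / A)"
      by (simp add: field_simps)
    moreover have "(of_nat (Suc j) :: complex) powr s \<noteq> 0"
      using of_nat_neq_0[of j, where 'a=complex] by (simp add: powr_def del: of_nat_Suc)
    moreover have "complex_of_real (n + 1) powr s \<noteq> 0" using a by (simp add: powr_def del: of_real_add)
    moreover have "complex_of_real (p + 1) powr s \<noteq> 0" using b by (simp add: powr_def del: of_real_add)
    ultimately show ?thesis unfolding intfv C_def by (simp only:)
  qed
  have VC: "V = C * riemann_zeta s"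
  proof (cases "C = 0")
    case True
    then have "(\<lambda>j. 0) sums V" using sumsV unfolding fC by simp
    from sums_unique2[OF this sums_zero] have "V = 0" .
    then show ?thesis using True by simp
  next
    case False
    have "(\<lambda>j. C * (1 / of_nat (Suc j) powr s)) sums V" using sumsV unfolding fC .
    from sums_mult_D[OF this False] have "riemann_zeta s = V / C"
      unfolding riemann_zeta_def by (rule sums_unique[symmetric])
    then show ?thesis using False by simp
  qed
  have "(\<Phi> has_integral V) S"
    using set_lebesgue_integral_eq_integral[OF setPhi] unfolding V_def
    by (simp add: has_integral_integrable_integral)
  then have HI: "(\<Phi> has_integral V) {0..1}"
    unfolding S_def by (simp add: has_integral_Icc_iff_Ioo)
  define X where "X = exp (\<i> * of_real pi * k / 2)"
  have EX: "E = - (X * X)"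
  proof -
    have e: "\<i> * of_real pi * (k + 1) = (\<i> * of_real pi * k / 2 + \<i> * of_real pi * k / 2) + \<i> * of_real pi"
      by (simp add: algebra_simps)
    have "E = exp (\<i> * of_real pi * k / 2 + \<i> * of_real pi * k / 2) * exp (\<i> * of_real pi)"
      unfolding E_def e by (rule exp_add)
    then show ?thesis unfolding X_def by (simp only: exp_add exp_pi_i') simp
  qed
  have "V = exp (\<i> * of_real pi * k / 2) * riemann_zeta (k + 2) * Gamma (k + 2)
            * ((\<i> / complex_of_real (p + 1)) powr k / complex_of_real ((p + 1)^2)
               - (\<i> / complex_of_real (n + 1)) powr k / complex_of_real ((n + 1)^2))"
    unfolding VC C_def final_alg[OF a] final_alg[OF b] EX X_def[symmetric] s_def
    by (simp add: algebra_simps)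
  then show ?thesis using HI unfolding \<Phi>_def by simp
qed


end
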